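(* Let $G$ be a group with a left-invariant metric $d$, and for $r>0$ let $G_r$ be the subgroup of $G$ generated by the ball $B(1_G,r)=\{g: d(1_G,g)<r\}$. If $\operatorname{asdim}(G_r)\le n$ for every $r>0$ (with the restricted metric), then $\operatorname{asdim}(G,d)\le n$.
   Context: For a metric space $Z$, $\operatorname{asdim}(Z)\le n$ iff for every $r>0$ there are $D<\infty$ and families $\mathcal U_1,\dots,\mathcal U_{n+1}$ of subsets of $Z$ covering $Z$, each $r$-disjoint (points in different members of a family are at distance $\ge r$), with members of diameter $\le D$. *)

theory Defs
  imports "HOL-Analysis.Analysis" "HOL-Algebra.Generated_Groups"
begin

definition asdim_le :: "'a set \<Rightarrow> ('a \<Rightarrow> 'a \<Rightarrow> real) \<Rightarrow> nat \<Rightarrow> bool" where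
  "asdim_le Z d n \<longleftrightarrow>
    (\<forall>r>0. \<exists>D::real. \<exists>U :: nat \<Rightarrow> 'a set set.
       (\<forall>i\<le>n. \<forall>A\<in>U i. A \<subseteq> Z) \<and>
       Z \<subseteq> (\<Union>i\<le>n. \<Union>(U i)) \<and>
       (\<forall>i\<le>n. \<forall>A\<in>U i. \<forall>B\<in>U i. A \<noteq> B \<longrightarrow> (\<forall>x\<in>A. \<forall>y\<in>B. r \<le> d x y)) \<and>
       (\<forall>i\<le>n. \<forall>A\<in>U i. \<forall>x\<in>A. \<forall>y\<in>A. d x y \<le> D))"

definition left_invariant_metric :: "('a, 'b) monoid_scheme \<Rightarrow> ('a \<Rightarrow> 'a \<Rightarrow> real) \<Rightarrow> bool" where
  "left_invariant_metric G d \<longleftrightarrow> Metric_space (carrier G) d \<and>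
     (\<forall>g\<in>carrier G. \<forall>x\<in>carrier G. \<forall>y\<in>carrier G. d (g \<otimes>\<^bsub>G\<^esub> x) (g \<otimes>\<^bsub>G\<^esub> y) = d x y)"

end

theory Submission
  imports Defs
begin

lemma (in group) cancel1: "x \<in> carrier G \<Longrightarrow> y \<in> carrier G \<Longrightarrow> x \<otimes> (inv x \<otimes> y) = y"
  by (simp add: m_assoc[symmetric])

lemma (in group) main_aux:
  assumes "left_invariant_metric G d"
    and "\<And>r. r > 0 \<Longrightarrow> asdim_le (generate G {g \<in> carrier G. d \<one> g < r}) d n"
  shows "asdim_le (carrier G) d n"
  unfolding asdim_le_def
proof (intro allI impI)
  have inv: "\<And>g x y. g \<in> carrier G \<Longrightarrow> x \<in> carrier G \<Longrightarrow> y \<in> carrier G \<Longrightarrow> d (g \<otimes> x) (g \<otimes> y) = d x y"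
    using assms(1) unfolding left_invariant_metric_def by blast
  fix r :: real assume r: "r > 0"
  define S where "S = {g \<in> carrier G. d \<one> g < r}"
  define H where "H = generate G S"
  have sg: "subgroup H G" unfolding H_def S_def by (rule generate_is_subgroup) auto
  have Hc: "H \<subseteq> carrier G" using sg subgroup.subset by blast
  have close: "\<And>x y. x \<in> carrier G \<Longrightarrow> y \<in> carrier G \<Longrightarrow> d x y < r \<Longrightarrow> inv x \<otimes> y \<in> H"
  proof -
    fix x y assume x: "x \<in> carrier G" and y: "y \<in> carrier G" and l: "d x y < r"
    have "d \<one> (inv x \<otimes> y) = d (inv x \<otimes> x) (inv x \<otimes> y)" using x by simp
    also have "\<dots> = d x y" using inv[of "inv x" x y] x y by simp
    finally have "inv x \<otimes> y \<in> S" unfolding S_def using x y l by simp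
    then show "inv x \<otimes> y \<in> H" unfolding H_def by (rule generate.incl)
  qed
  obtain D U where U1: "\<forall>i\<le>n. \<forall>A\<in>U i. A \<subseteq> H" and U2: "H \<subseteq> (\<Union>i\<le>n. \<Union>(U i))"
    and U3: "\<forall>i\<le>n. \<forall>A\<in>U i. \<forall>B\<in>U i. A \<noteq> B \<longrightarrow> (\<forall>x\<in>A. \<forall>y\<in>B. r \<le> d x y)"
    and U4: "\<forall>i\<le>n. \<forall>A\<in>U i. \<forall>x\<in>A. \<forall>y\<in>A. d x y \<le> D"
  proof -
    have AH: "asdim_le H d n" unfolding H_def S_def using assms(2)[OF r] .
    have "\<exists>D U. (\<forall>i\<le>n. \<forall>A\<in>U i. A \<subseteq> H) \<and> H \<subseteq> (\<Union>i\<le>n. \<Union>(U i)) \<and>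
       (\<forall>i\<le>n. \<forall>A\<in>U i. \<forall>B\<in>U i. A \<noteq> B \<longrightarrow> (\<forall>x\<in>A. \<forall>y\<in>B. r \<le> d x y)) \<and>
       (\<forall>i\<le>n. \<forall>A\<in>U i. \<forall>x\<in>A. \<forall>y\<in>A. d x y \<le> D)"
      using spec[OF AH[unfolded asdim_le_def], of r] r by (rule mp)
    then show ?thesis by (elim exE conjE) (rule that; assumption)
  qed
  define rep where "rep x = (SOME g. g \<in> carrier G \<and> inv x \<otimes> g \<in> H)" for x
  have rep1: "rep x \<in> carrier G \<and> inv x \<otimes> rep x \<in> H" if "x \<in> carrier G" for x
    unfolding rep_def
  proof (rule someI)
    show "x \<in> carrier G \<and> inv x \<otimes> x \<in> H" using that subgroup.one_closed[OF sg] by simp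
  qed
  have rep_eq: "rep x = rep y" if x: "x \<in> carrier G" and y: "y \<in> carrier G" and h: "inv x \<otimes> y \<in> H" for x y
  proof -
    have "\<And>g. g \<in> carrier G \<Longrightarrow> (inv x \<otimes> g \<in> H) = (inv y \<otimes> g \<in> H)"
    proof -
      fix g assume g: "g \<in> carrier G"
      have hi: "inv (inv x \<otimes> y) \<in> H" by (rule subgroup.m_inv_closed[OF sg h])
      have e1: "inv y \<otimes> g = inv (inv x \<otimes> y) \<otimes> (inv x \<otimes> g)" using x y g
        by (simp add: inv_mult_group m_assoc cancel1)
      have e2: "inv x \<otimes> g = (inv x \<otimes> y) \<otimes> (inv y \<otimes> g)" using x y g
        by (simp add: m_assoc cancel1)
      show "(inv x \<otimes> g \<in> H) = (inv y \<otimes> g \<in> H)"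
      proof
        assume "inv x \<otimes> g \<in> H"
        then show "inv y \<otimes> g \<in> H" by (subst e1) (rule subgroup.m_closed[OF sg hi])
      next
        assume "inv y \<otimes> g \<in> H"
        then show "inv x \<otimes> g \<in> H" by (subst e2) (rule subgroup.m_closed[OF sg h])
      qed
    qed
    then have "(\<lambda>g. g \<in> carrier G \<and> inv x \<otimes> g \<in> H) = (\<lambda>g. g \<in> carrier G \<and> inv y \<otimes> g \<in> H)"
      by (intro ext) blast
    then show ?thesis unfolding rep_def by simp
  qed
  have rep_rep: "rep (rep x) = rep x" if "x \<in> carrier G" for x
  proof -
    have "rep x = rep (rep x)" using rep1[OF that] that by (intro rep_eq) auto
    then show ?thesis by (rule sym)
  qed
  define V where "V i = {(\<lambda>a. rep g \<otimes> a) ` A | g A. g \<in> carrier G \<and> A \<in> U i}" for i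
  show "\<exists>D U. (\<forall>i\<le>n. \<forall>A\<in>U i. A \<subseteq> carrier G) \<and>
          carrier G \<subseteq> (\<Union>i\<le>n. \<Union> (U i)) \<and>
          (\<forall>i\<le>n. \<forall>A\<in>U i. \<forall>B\<in>U i. A \<noteq> B \<longrightarrow> (\<forall>x\<in>A. \<forall>y\<in>B. r \<le> d x y)) \<and>
          (\<forall>i\<le>n. \<forall>A\<in>U i. \<forall>x\<in>A. \<forall>y\<in>A. d x y \<le> D)"
  proof (intro exI[of _ D] exI[of _ V] conjI allI impI ballI)
    fix i A assume i: "i \<le> n" and A: "A \<in> V i"
    then obtain g B where g: "g \<in> carrier G" and B: "B \<in> U i" and AB: "A = (\<lambda>a. rep g \<otimes> a) ` B"
      unfolding V_def by blast
    have "B \<subseteq> carrier G" using U1 i B Hc by blast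
    then show "A \<subseteq> carrier G" using AB rep1[OF g] by auto
    {
      fix x y assume x: "x \<in> A" and y: "y \<in> A"
      then obtain a b where a: "a \<in> B" and b: "b \<in> B" and xa: "x = rep g \<otimes> a" and yb: "y = rep g \<otimes> b"
        using AB by blast
      have "d x y = d a b" using xa yb inv[of "rep g" a b] rep1[OF g] a b \<open>B \<subseteq> carrier G\<close> by auto
      then show "d x y \<le> D" using U4 i B a b by auto
    }
    {
      fix A' x y assume A': "A' \<in> V i" and ne: "A \<noteq> A'" and x: "x \<in> A" and y: "y \<in> A'"
      then obtain g' B' where g': "g' \<in> carrier G" and B': "B' \<in> U i" and AB': "A' = (\<lambda>a. rep g' \<otimes> a) ` B'"
        unfolding V_def by blast
      have B'c: "B' \<subseteq> carrier G" using U1 i B' Hc by blast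
      obtain a b where a: "a \<in> B" and b: "b \<in> B'" and xa: "x = rep g \<otimes> a" and yb: "y = rep g' \<otimes> b"
        using AB AB' x y by blast
      have ac: "a \<in> carrier G" and bc: "b \<in> carrier G" and aH: "a \<in> H" and bH: "b \<in> H"
        using a b \<open>B \<subseteq> carrier G\<close> B'c U1 i B B' by blast+
      have rg: "rep g \<in> carrier G" and rg': "rep g' \<in> carrier G" using rep1 g g' by auto
      show "r \<le> d x y"
      proof (rule ccontr)
        assume "\<not> r \<le> d x y"
        then have "inv x \<otimes> y \<in> H" using close xa yb ac bc rg rg' by simp
        then have h1: "a \<otimes> (inv x \<otimes> y) \<otimes> inv b \<in> H"
          by (rule subgroup.m_closed[OF sg subgroup.m_closed[OF sg aH] subgroup.m_inv_closed[OF sg bH]])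
        have "a \<otimes> (inv x \<otimes> y) \<otimes> inv b = inv (rep g) \<otimes> rep g'"
          using xa yb ac bc rg rg' by (simp add: inv_mult_group m_assoc cancel1)
        with h1 have "rep (rep g) = rep (rep g')" using rg rg' by (intro rep_eq) auto
        then have eq: "rep g = rep g'" using rep_rep[OF g] rep_rep[OF g'] by metis
        with ne AB AB' have "B \<noteq> B'" by auto
        then have "r \<le> d a b" using U3 i B B' a b by blast
        moreover have "d x y = d a b" using xa yb eq inv[of "rep g" a b] rg ac bc by simp
        ultimately show False using \<open>\<not> r \<le> d x y\<close> by simp
      qed
    }
  next
    show "carrier G \<subseteq> (\<Union>i\<le>n. \<Union> (V i))"
    proof
      fix x assume x: "x \<in> carrier G"
      have rx: "rep x \<in> carrier G" "inv x \<otimes> rep x \<in> H" using rep1[OF x] by auto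
      then have h: "inv (rep x) \<otimes> x \<in> H"
      proof -
        have "inv (inv x \<otimes> rep x) \<in> H" by (rule subgroup.m_inv_closed[OF sg rx(2)])
        then show ?thesis using x rx by (simp add: inv_mult_group)
      qed
      then obtain i B where i: "i \<le> n" and B: "B \<in> U i" and hB: "inv (rep x) \<otimes> x \<in> B"
        using U2 by blast
      have "rep (rep x) \<otimes> (inv (rep x) \<otimes> x) = x"
        using rep_rep[OF x] rx x by (simp add: cancel1)
      then have "x \<in> (\<lambda>a. rep (rep x) \<otimes> a) ` B" using hB by (metis image_eqI)
      moreover have "(\<lambda>a. rep (rep x) \<otimes> a) ` B \<in> V i" unfolding V_def using rx B by blast
      ultimately show "x \<in> (\<Union>i\<le>n. \<Union> (V i))" using i by blast
    qed
  qed
qed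


theorem mainTheorem11:
  fixes G :: "('a, 'b) monoid_scheme" and d :: "'a \<Rightarrow> 'a \<Rightarrow> real" and n :: nat
  assumes "group G"
    and "left_invariant_metric G d"
    and "\<And>r. r > 0 \<Longrightarrow>
           asdim_le (generate G {g \<in> carrier G. d \<one>\<^bsub>G\<^esub> g < r}) d n"
  shows "asdim_le (carrier G) d n"
  using group.main_aux[OF assms] .

end
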